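(* The inclusion $K\colon\Delta_0\hookrightarrow\mathbf{Grph}$ is not a saturated class of arities: there exist $\Delta_0$-induced endofunctors of $\mathbf{Grph}$ whose composite is not $\Delta_0$-induced.
   Context: Here $\mathcal V=\mathbf{Set}$. $\mathbb G_1$ is the category freely generated by two parallel arrows $0\rightrightarrows 1$, and $\mathbf{Grph}=[\mathbb G_1^{\mathrm{op}},\mathbf{Set}]$ is the category of directed multigraphs. $\Delta_0$ is the (small, dense) full subcategory of $\mathbf{Grph}$ on the graphs $[n]=(0\to 1\to\cdots\to n)$ for $n\ge 0$. An endofunctor $G$ of $\mathbf{Grph}$ is $\Delta_0$-induced if it is the pointwise left Kan extension along $K$ of its restriction $GK$; $\Delta_0$ is a saturated class of arities if $\Delta_0$-induced endofunctors are closed under composition. *)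

theory Defs
  imports Main
begin

record ('v, 'e) graph =
  gV  :: "'v set"
  gE  :: "'e set"
  src :: "'e \<Rightarrow> 'v"
  tgt :: "'e \<Rightarrow> 'v"

definition wf_graph :: "('v, 'e) graph \<Rightarrow> bool" where
  "wf_graph G \<longleftrightarrow> (\<forall>e\<in>gE G. src G e \<in> gV G \<and> tgt G e \<in> gV G)"

type_synonym ('v, 'e, 'w, 'f) gmor = "('v \<Rightarrow> 'w) \<times> ('e \<Rightarrow> 'f)"

definition graph_hom :: "('v, 'e) graph \<Rightarrow> ('w, 'f) graph \<Rightarrow> ('v, 'e, 'w, 'f) gmor \<Rightarrow> bool" where
  "graph_hom G H h \<longleftrightarrow>
     (\<forall>v\<in>gV G. fst h v \<in> gV H) \<and>
     (\<forall>e\<in>gE G. snd h e \<in> gE H \<and> src H (snd h e) = fst h (src G e)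
                              \<and> tgt H (snd h e) = fst h (tgt G e))"

section \<open>The category Delta_0 of linear graphs [n] = (0 -> 1 -> ... -> n)\<close>

definition lin :: "nat \<Rightarrow> (nat, nat) graph" where
  "lin n = \<lparr>gV = {0..n}, gE = {0..<n}, src = (\<lambda>i. i), tgt = Suc\<rparr>"

text \<open>Graph maps [m] -> [n] are exactly the shifts i |-> i + k with k + m <= n.\<close>
definition sh :: "nat \<Rightarrow> (nat, nat, nat, nat) gmor" where
  "sh k = ((\<lambda>i. i + k), (\<lambda>i. i + k))"

text \<open>A functor Delta_0 -> Grph: object part, and morphism part indexed by (m, n, k)
  for the shift [m] -> [n] by k (meaningful when k + m <= n).\<close>
type_synonym ('v, 'e) d0fun =
  "(nat \<Rightarrow> ('v, 'e) graph) \<times> (nat \<Rightarrow> nat \<Rightarrow> nat \<Rightarrow> ('v, 'e, 'v, 'e) gmor)"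

definition d0_functor :: "('v, 'e) d0fun \<Rightarrow> bool" where
  "d0_functor F \<longleftrightarrow>
     (\<forall>n. wf_graph (fst F n)) \<and>
     (\<forall>m n k. k + m \<le> n \<longrightarrow> graph_hom (fst F m) (fst F n) (snd F m n k)) \<and>
     (\<forall>n. (\<forall>v\<in>gV (fst F n). fst (snd F n n 0) v = v) \<and>
          (\<forall>e\<in>gE (fst F n). snd (snd F n n 0) e = e)) \<and>
     (\<forall>m n p k j. k + m \<le> n \<longrightarrow> j + n \<le> p \<longrightarrow>
        (\<forall>v\<in>gV (fst F m). fst (snd F n p j) (fst (snd F m n k) v) = fst (snd F m p (k + j)) v) \<and>
        (\<forall>e\<in>gE (fst F m). snd (snd F n p j) (snd (snd F m n k) e) = snd (snd F m p (k + j)) e))"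

section \<open>Maps [n] -> X (paths of length n in X)\<close>

type_synonym ('x, 'y) path = "'x list \<times> 'y list"

definition plen :: "('x, 'y) path \<Rightarrow> nat" where
  "plen p = length (snd p)"

definition is_path :: "('x, 'y) graph \<Rightarrow> ('x, 'y) path \<Rightarrow> bool" where
  "is_path X p \<longleftrightarrow>
     length (fst p) = Suc (length (snd p)) \<and> set (fst p) \<subseteq> gV X \<and>
     (\<forall>i<length (snd p). snd p ! i \<in> gE X \<and> src X (snd p ! i) = fst p ! i
                          \<and> tgt X (snd p ! i) = fst p ! Suc i)"

text \<open>Precomposition of a path [n] -> X with the shift [m] -> [n] by k.\<close>
definition subpath :: "nat \<Rightarrow> nat \<Rightarrow> ('x, 'y) path \<Rightarrow> ('x, 'y) path" where
  "subpath k m p = (take (Suc m) (drop k (fst p)), take m (drop k (snd p)))"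

definition pmap :: "('x, 'y, 'a, 'b) gmor \<Rightarrow> ('x, 'y) path \<Rightarrow> ('a, 'b) path" where
  "pmap h p = (map (fst h) (fst p), map (snd h) (snd p))"

definition path_mor :: "('x, 'y) path \<Rightarrow> (nat, nat, 'x, 'y) gmor" where
  "path_mor p = ((\<lambda>i. fst p ! i), (\<lambda>i. snd p ! i))"

section \<open>Pointwise left Kan extension along K, via the colimit formula
  (Lan_K F)(X) = colim_{([n] -> X) in K/X} F[n], computed pointwise on vertices and edges\<close>

definition lanV_el :: "('v, 'e) d0fun \<Rightarrow> ('x, 'y) graph \<Rightarrow> (('x, 'y) path \<times> 'v) set" where
  "lanV_el F X = {(p, v). is_path X p \<and> v \<in> gV (fst F (plen p))}"

definition lanE_el :: "('v, 'e) d0fun \<Rightarrow> ('x, 'y) graph \<Rightarrow> (('x, 'y) path \<times> 'e) set" where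
  "lanE_el F X = {(p, e). is_path X p \<and> e \<in> gE (fst F (plen p))}"

definition lanV_gen :: "('v, 'e) d0fun \<Rightarrow> ('x, 'y) graph \<Rightarrow> ((('x, 'y) path \<times> 'v) \<times> (('x, 'y) path \<times> 'v)) set" where
  "lanV_gen F X = {((subpath k m p, v), (p, fst (snd F m (plen p) k) v)) | p k m v.
                     is_path X p \<and> k + m \<le> plen p \<and> v \<in> gV (fst F m)}"

definition lanE_gen :: "('v, 'e) d0fun \<Rightarrow> ('x, 'y) graph \<Rightarrow> ((('x, 'y) path \<times> 'e) \<times> (('x, 'y) path \<times> 'e)) set" where
  "lanE_gen F X = {((subpath k m p, e), (p, snd (snd F m (plen p) k) e)) | p k m e.
                     is_path X p \<and> k + m \<le> plen p \<and> e \<in> gE (fst F m)}"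

definition lanV_rel :: "('v, 'e) d0fun \<Rightarrow> ('x, 'y) graph \<Rightarrow> ((('x, 'y) path \<times> 'v) \<times> (('x, 'y) path \<times> 'v)) set" where
  "lanV_rel F X = (lanV_gen F X \<union> (lanV_gen F X)\<inverse>)\<^sup>* \<inter> (lanV_el F X \<times> lanV_el F X)"

definition lanE_rel :: "('v, 'e) d0fun \<Rightarrow> ('x, 'y) graph \<Rightarrow> ((('x, 'y) path \<times> 'e) \<times> (('x, 'y) path \<times> 'e)) set" where
  "lanE_rel F X = (lanE_gen F X \<union> (lanE_gen F X)\<inverse>)\<^sup>* \<inter> (lanE_el F X \<times> lanE_el F X)"

definition rep :: "'a set \<Rightarrow> 'a" where
  "rep c = (SOME x. x \<in> c)"

definition lan_obj :: "('v, 'e) d0fun \<Rightarrow> ('x, 'y) graph \<Rightarrow>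
    ((('x, 'y) path \<times> 'v) set, (('x, 'y) path \<times> 'e) set) graph" where
  "lan_obj F X =
     \<lparr>gV = lanV_el F X // lanV_rel F X,
      gE = lanE_el F X // lanE_rel F X,
      src = (\<lambda>c. lanV_rel F X `` {(fst (rep c), src (fst F (plen (fst (rep c)))) (snd (rep c)))}),
      tgt = (\<lambda>c. lanV_rel F X `` {(fst (rep c), tgt (fst F (plen (fst (rep c)))) (snd (rep c)))})\<rparr>"

text \<open>Action of Lan_K F on a graph map h : X -> Y (only the codomain Y is needed).\<close>
definition lan_mor :: "('v, 'e) d0fun \<Rightarrow> ('a, 'b) graph \<Rightarrow> ('x, 'y, 'a, 'b) gmor \<Rightarrow>
    ((('x, 'y) path \<times> 'v) set, (('x, 'y) path \<times> 'e) set,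
     (('a, 'b) path \<times> 'v) set, (('a, 'b) path \<times> 'e) set) gmor" where
  "lan_mor F Y h =
     ((\<lambda>c. lanV_rel F Y `` {(pmap h (fst (rep c)), snd (rep c))}),
      (\<lambda>c. lanE_rel F Y `` {(pmap h (fst (rep c)), snd (rep c))}))"

section \<open>The composite G = Lan_K F2 o Lan_K F1 and its restriction G K\<close>

definition comp_mor where
  "comp_mor F2 F1 Y h = lan_mor F2 (lan_obj F1 Y) (lan_mor F1 Y h)"

definition comp_res where
  "comp_res F2 F1 =
     ((\<lambda>n. lan_obj F2 (lan_obj F1 (lin n))),
      (\<lambda>m n k. comp_mor F2 F1 (lin n) (sh k)))"

text \<open>Canonical comparison map (Lan_K (G K))(X) -> G(X), sending the class of
  (p : [n] -> X, w in G[n]) to G(p)(w).\<close>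
definition comparison where
  "comparison F2 F1 X =
     ((\<lambda>c. fst (comp_mor F2 F1 X (path_mor (fst (rep c)))) (snd (rep c))),
      (\<lambda>c. snd (comp_mor F2 F1 X (path_mor (fst (rep c)))) (snd (rep c))))"

text \<open>G is Delta_0-induced at X: the canonical comparison is an isomorphism of graphs.\<close>
definition comp_induced_at where
  "comp_induced_at F2 F1 X \<longleftrightarrow>
     bij_betw (fst (comparison F2 F1 X)) (gV (lan_obj (comp_res F2 F1) X)) (gV (lan_obj F2 (lan_obj F1 X))) \<and>
     bij_betw (snd (comparison F2 F1 X)) (gE (lan_obj (comp_res F2 F1) X)) (gE (lan_obj F2 (lan_obj F1 X)))"

end

theory Submission
  imports Defs
begin

definition F1 :: "(nat, nat) d0fun" where
 "F1 = ((\<lambda>m. \<lparr>gV = {..<3*(m+1)}, gE = {..<3*m},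
        src = (\<lambda>e. if e mod 3 = 2 then e+3 else e),
        tgt = (\<lambda>e. if e mod 3 = 2 then e - 2 else e + 4)\<rparr>),
       (\<lambda>m n k. ((\<lambda>v. v + 3*k), (\<lambda>e. e + 3*k))))"

definition F2 :: "(nat, nat) d0fun" where
 "F2 = ((\<lambda>m. if 12 \<le> m then \<lparr>gV = {0}, gE = {0}, src = (\<lambda>_. 0), tgt = (\<lambda>_. 0)\<rparr>
               else \<lparr>gV = {}, gE = {}, src = (\<lambda>_. 0), tgt = (\<lambda>_. 0)\<rparr>),
        (\<lambda>m n k. ((\<lambda>v. v), (\<lambda>e. e))))"

lemma F1_arith1: "(e::nat) < 3*m \<Longrightarrow> (if e mod 3 = 2 then e+3 else e) < 3*(m+1)"
  by presburger
lemma F1_arith2: "(e::nat) < 3*m \<Longrightarrow> (if e mod 3 = 2 then e-2 else e+4) < 3*(m+1)"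
  by presburger

lemma F1_functor: "d0_functor F1"
  unfolding d0_functor_def F1_def wf_graph_def graph_hom_def
  using F1_arith1 F1_arith2 by (auto simp: mod_add_left_eq)

lemma F2_functor: "d0_functor F2"
  unfolding d0_functor_def F2_def wf_graph_def graph_hom_def
  by auto

lemma equiv_lanV: "equiv (lanV_el F X) (lanV_rel F X)"
proof -
  have s: "sym ((lanV_gen F X \<union> (lanV_gen F X)\<inverse>)\<^sup>*)"
    by (rule sym_rtrancl[OF sym_Un_converse])
  show ?thesis unfolding equiv_def refl_on_def lanV_rel_def
    using s by (auto simp: sym_def trans_def intro: rtrancl_trans)
qed

lemma equiv_lanE: "equiv (lanE_el F X) (lanE_rel F X)"
proof -
  have s: "sym ((lanE_gen F X \<union> (lanE_gen F X)\<inverse>)\<^sup>*)"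
    by (rule sym_rtrancl[OF sym_Un_converse])
  show ?thesis unfolding equiv_def refl_on_def lanE_rel_def
    using s by (auto simp: sym_def trans_def intro: rtrancl_trans)
qed

lemma rep_in: "equiv A r \<Longrightarrow> c \<in> A // r \<Longrightarrow> rep c \<in> c"
  unfolding rep_def using in_quotient_imp_non_empty by (metis ex_in_conv someI_ex)

lemma rep_in_A: "equiv A r \<Longrightarrow> c \<in> A // r \<Longrightarrow> rep c \<in> A"
  using rep_in by (metis in_quotient_imp_subset subsetD)

lemma rep_rel: "equiv A r \<Longrightarrow> x \<in> A \<Longrightarrow> (x, rep (r``{x})) \<in> r"
  using rep_in[of A r "r``{x}"] by (simp add: quotientI)

lemma plen_subpath: "k + m \<le> plen p \<Longrightarrow> plen (subpath k m p) = m"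
  unfolding plen_def subpath_def by simp

definition sigS :: "('v,'e) d0fun \<Rightarrow> ('x,'y) path \<times> 'e \<Rightarrow> ('x,'y) path \<times> 'v" where
  "sigS F a = (fst a, src (fst F (plen (fst a))) (snd a))"
definition sigT :: "('v,'e) d0fun \<Rightarrow> ('x,'y) path \<times> 'e \<Rightarrow> ('x,'y) path \<times> 'v" where
  "sigT F a = (fst a, tgt (fst F (plen (fst a))) (snd a))"

lemma genV_intro: "is_path X p \<Longrightarrow> k + m \<le> plen p \<Longrightarrow> v \<in> gV (fst F m) \<Longrightarrow>
   ((subpath k m p, v), (p, fst (snd F m (plen p) k) v)) \<in> lanV_gen F X"
  unfolding lanV_gen_def by blast

lemma sigS_gen: assumes F: "d0_functor F" and ab: "(a,b) \<in> lanE_gen F X"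
  shows "(sigS F a, sigS F b) \<in> lanV_gen F X"
proof -
  from ab obtain p k m e where a: "a = (subpath k m p, e)" and b: "b = (p, snd (snd F m (plen p) k) e)"
    and p: "is_path X p" and km: "k + m \<le> plen p" and e: "e \<in> gE (fst F m)"
    unfolding lanE_gen_def by blast
  have h: "graph_hom (fst F m) (fst F (plen p)) (snd F m (plen p) k)" using F km unfolding d0_functor_def by blast
  have w: "wf_graph (fst F m)" using F unfolding d0_functor_def by blast
  have v: "src (fst F m) e \<in> gV (fst F m)" using w e unfolding wf_graph_def by blast
  have eq: "src (fst F (plen p)) (snd (snd F m (plen p) k) e) = fst (snd F m (plen p) k) (src (fst F m) e)"
    using h e unfolding graph_hom_def by blast
  show ?thesis unfolding a b sigS_def using genV_intro[OF p km v] eq plen_subpath[OF km] by simp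
qed

lemma sigT_gen: assumes F: "d0_functor F" and ab: "(a,b) \<in> lanE_gen F X"
  shows "(sigT F a, sigT F b) \<in> lanV_gen F X"
proof -
  from ab obtain p k m e where a: "a = (subpath k m p, e)" and b: "b = (p, snd (snd F m (plen p) k) e)"
    and p: "is_path X p" and km: "k + m \<le> plen p" and e: "e \<in> gE (fst F m)"
    unfolding lanE_gen_def by blast
  have h: "graph_hom (fst F m) (fst F (plen p)) (snd F m (plen p) k)" using F km unfolding d0_functor_def by blast
  have w: "wf_graph (fst F m)" using F unfolding d0_functor_def by blast
  have v: "tgt (fst F m) e \<in> gV (fst F m)" using w e unfolding wf_graph_def by blast
  have eq: "tgt (fst F (plen p)) (snd (snd F m (plen p) k) e) = fst (snd F m (plen p) k) (tgt (fst F m) e)"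
    using h e unfolding graph_hom_def by blast
  show ?thesis unfolding a b sigT_def using genV_intro[OF p km v] eq plen_subpath[OF km] by simp
qed

lemma rtrancl_map:
  assumes "\<And>a b. (a,b) \<in> R \<Longrightarrow> (f a, f b) \<in> S"
    and "(a,b) \<in> (R \<union> R\<inverse>)\<^sup>*"
  shows "(f a, f b) \<in> (S \<union> S\<inverse>)\<^sup>*"
  using assms(2)
proof (induction rule: rtrancl_induct)
  case base then show ?case by simp
next
  case (step y z)
  then have "(f y, f z) \<in> S \<union> S\<inverse>" using assms(1) by blast
  with step.IH show ?case by (rule rtrancl_into_rtrancl)
qed

lemma sig_el: assumes F: "d0_functor F" and x: "x \<in> lanE_el F X"
  shows "sigS F x \<in> lanV_el F X" "sigT F x \<in> lanV_el F X"
proof -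
  have w: "wf_graph (fst F (plen (fst x)))" using F unfolding d0_functor_def by blast
  show "sigS F x \<in> lanV_el F X" "sigT F x \<in> lanV_el F X"
    using x w unfolding lanE_el_def lanV_el_def sigS_def sigT_def wf_graph_def by auto
qed

lemma src_class: assumes F: "d0_functor F" and x: "x \<in> lanE_el F X"
  shows "src (lan_obj F X) (lanE_rel F X `` {x}) = lanV_rel F X `` {sigS F x}"
proof -
  let ?r = "rep (lanE_rel F X `` {x})"
  have xr: "(x, ?r) \<in> lanE_rel F X" by (rule rep_rel[OF equiv_lanE x])
  hence r1: "(x, ?r) \<in> (lanE_gen F X \<union> (lanE_gen F X)\<inverse>)\<^sup>*" and r2: "?r \<in> lanE_el F X"
    unfolding lanE_rel_def by auto
  have "(sigS F x, sigS F ?r) \<in> (lanV_gen F X \<union> (lanV_gen F X)\<inverse>)\<^sup>*"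
    by (rule rtrancl_map[OF _ r1]) (rule sigS_gen[OF F])
  hence "(sigS F x, sigS F ?r) \<in> lanV_rel F X"
    unfolding lanV_rel_def using sig_el[OF F x] sig_el[OF F r2] by auto
  hence "lanV_rel F X `` {sigS F x} = lanV_rel F X `` {sigS F ?r}"
    using equiv_class_eq_iff[OF equiv_lanV] by blast
  thus ?thesis by (simp add: lan_obj_def sigS_def)
qed

lemma tgt_class: assumes F: "d0_functor F" and x: "x \<in> lanE_el F X"
  shows "tgt (lan_obj F X) (lanE_rel F X `` {x}) = lanV_rel F X `` {sigT F x}"
proof -
  let ?r = "rep (lanE_rel F X `` {x})"
  have xr: "(x, ?r) \<in> lanE_rel F X" by (rule rep_rel[OF equiv_lanE x])
  hence r1: "(x, ?r) \<in> (lanE_gen F X \<union> (lanE_gen F X)\<inverse>)\<^sup>*" and r2: "?r \<in> lanE_el F X"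
    unfolding lanE_rel_def by auto
  have "(sigT F x, sigT F ?r) \<in> (lanV_gen F X \<union> (lanV_gen F X)\<inverse>)\<^sup>*"
    by (rule rtrancl_map[OF _ r1]) (rule sigT_gen[OF F])
  hence "(sigT F x, sigT F ?r) \<in> lanV_rel F X"
    unfolding lanV_rel_def using sig_el[OF F x] sig_el[OF F r2] by auto
  hence "lanV_rel F X `` {sigT F x} = lanV_rel F X `` {sigT F ?r}"
    using equiv_class_eq_iff[OF equiv_lanV] by blast
  thus ?thesis by (simp add: lan_obj_def sigT_def)
qed

lemma gen_class: "(a,b) \<in> lanV_gen F X \<Longrightarrow> a \<in> lanV_el F X \<Longrightarrow> b \<in> lanV_el F X \<Longrightarrow>
   lanV_rel F X `` {a} = lanV_rel F X `` {b}"
proof -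
  assume ab: "(a,b) \<in> lanV_gen F X" and a: "a \<in> lanV_el F X" and b: "b \<in> lanV_el F X"
  have "(a,b) \<in> lanV_rel F X" unfolding lanV_rel_def using ab a b by auto
  thus ?thesis using equiv_class_eq_iff[OF equiv_lanV] by blast
qed


section \<open>No long paths in G1[n] for small n\<close>

lemma lin_path: assumes p: "is_path (lin n) p"
  shows "i \<le> plen p \<Longrightarrow> fst p ! i = fst p ! 0 + i \<and> fst p ! i \<le> n"
proof (induction i)
  case 0
  have "fst p ! 0 \<in> set (fst p)" using p unfolding is_path_def by simp
  moreover have "set (fst p) \<subseteq> {0..n}" using p unfolding is_path_def lin_def by simp
  ultimately show ?case by auto
next
  case (Suc i)
  then have i: "i < length (snd p)" unfolding plen_def by simp
  have "Suc i < length (fst p)" using p i unfolding is_path_def by simp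
  hence "fst p ! Suc i \<in> set (fst p)" by simp
  hence le: "fst p ! Suc i \<le> n" using p unfolding is_path_def lin_def by auto
  have "fst p ! Suc i = Suc (fst p ! i)" using p i unfolding is_path_def lin_def by auto
  then show ?case using Suc le by simp
qed

definition psi :: "(nat list \<times> nat list) \<times> nat \<Rightarrow> nat" where
 "psi x = 3 * (fst (fst x) ! 0 + snd x div 3) +
    (if snd x mod 3 = 0 then 4 else if snd x mod 3 = 1 then 2 else 0)"

lemma psi_gen: assumes "(a,b) \<in> lanV_gen F1 (lin n)" shows "psi a = psi b"
proof -
  from assms obtain p k m v where a: "a = (subpath k m p, v)" and b: "b = (p, v + 3*k)"
    and p: "is_path (lin n) p" and km: "k + m \<le> plen p"
    unfolding lanV_gen_def F1_def by auto
  have kl: "k < length (fst p)" using p km unfolding is_path_def plen_def by simp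
  have "fst (subpath k m p) ! 0 = fst p ! k" unfolding subpath_def using kl by simp
  also have "\<dots> = fst p ! 0 + k" using lin_path[OF p, of k] km by simp
  finally have "fst (subpath k m p) ! 0 = fst p ! 0 + k" .
  thus ?thesis unfolding a b psi_def by simp
qed

lemma psi_rel: assumes "(a,b) \<in> lanV_rel F1 (lin n)" shows "psi a = psi b"
proof -
  have "(a,b) \<in> (lanV_gen F1 (lin n) \<union> (lanV_gen F1 (lin n))\<inverse>)\<^sup>*"
    using assms unfolding lanV_rel_def by auto
  thus ?thesis
  proof (induction rule: rtrancl_induct)
    case base then show ?case by simp
  next
    case (step y z) then show ?case using psi_gen by (metis UnE converseD)
  qed
qed

lemma psi_bound: assumes "x \<in> lanV_el F1 (lin n)" shows "psi x \<le> 3*n + 4"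
proof -
  obtain q v where x: "x = (q,v)" by fastforce
  have q: "is_path (lin n) q" and v: "v < 3 * (plen q + 1)"
    using assms unfolding x lanV_el_def F1_def by auto
  have "fst q ! 0 + plen q \<le> n" using lin_path[OF q, of "plen q"] by simp
  moreover have "v div 3 \<le> plen q" using v by presburger
  ultimately show ?thesis unfolding x psi_def by simp
qed

lemma F1_src: "src (fst F1 m) e = (if e mod 3 = 2 then e+3 else e)"
  by (simp add: F1_def)
lemma F1_tgt: "tgt (fst F1 m) e = (if e mod 3 = 2 then e - 2 else e + 4)"
  by (simp add: F1_def)

lemma psi_edge: "psi (sigT F1 y) = psi (sigS F1 y) + 1"
proof -
  obtain q e where y: "y = (q,e)" by fastforce
  obtain i r where e: "e = 3*i + r" and r: "r < 3" using div_mod_decomp[of e 3]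
    by (metis mod_less_divisor zero_less_numeral mult.commute)
  from r have "r = 0 \<or> r = 1 \<or> r = 2" by auto
  then show ?thesis unfolding y sigS_def sigT_def psi_def F1_src F1_tgt e by (auto; presburger)
qed

lemma phi_class: assumes "z \<in> lanV_el F1 (lin n)"
  shows "psi (rep (lanV_rel F1 (lin n) `` {z})) = psi z"
  using psi_rel[OF rep_rel[OF equiv_lanV assms]] by simp

lemma G1_short: assumes n: "n \<le> 2" and Q: "is_path (lan_obj F1 (lin n)) Q"
  shows "plen Q \<le> 10"
proof -
  let ?G = "lan_obj F1 (lin n)"
  let ?Phi = "\<lambda>c. psi (rep c)"
  have step: "?Phi (fst Q ! Suc i) = ?Phi (fst Q ! i) + 1" if i: "i < plen Q" for i
  proof -
    have d: "snd Q ! i \<in> lanE_el F1 (lin n) // lanE_rel F1 (lin n)"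
      using Q i unfolding is_path_def plen_def lan_obj_def by auto
    then obtain y where y: "y \<in> lanE_el F1 (lin n)" and dy: "snd Q ! i = lanE_rel F1 (lin n) `` {y}"
      by (auto elim: quotientE)
    have "fst Q ! i = src ?G (snd Q ! i)" using Q i unfolding is_path_def plen_def by auto
    also have "\<dots> = lanV_rel F1 (lin n) `` {sigS F1 y}" unfolding dy by (rule src_class[OF F1_functor y])
    finally have s: "?Phi (fst Q ! i) = psi (sigS F1 y)"
      using phi_class[OF sig_el(1)[OF F1_functor y]] by simp
    have "fst Q ! Suc i = tgt ?G (snd Q ! i)" using Q i unfolding is_path_def plen_def by auto
    also have "\<dots> = lanV_rel F1 (lin n) `` {sigT F1 y}" unfolding dy by (rule tgt_class[OF F1_functor y])
    finally have t: "?Phi (fst Q ! Suc i) = psi (sigT F1 y)"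
      using phi_class[OF sig_el(2)[OF F1_functor y]] by simp
    show ?thesis using s t psi_edge by simp
  qed
  have ind: "i \<le> plen Q \<Longrightarrow> ?Phi (fst Q ! i) = ?Phi (fst Q ! 0) + i" for i
    by (induction i) (use step in auto)
  have "fst Q ! plen Q \<in> set (fst Q)" using Q unfolding is_path_def plen_def by simp
  hence "fst Q ! plen Q \<in> lanV_el F1 (lin n) // lanV_rel F1 (lin n)"
    using Q unfolding is_path_def lan_obj_def by auto
  hence "rep (fst Q ! plen Q) \<in> lanV_el F1 (lin n)" by (rule rep_in_A[OF equiv_lanV])
  hence "?Phi (fst Q ! plen Q) \<le> 3*n+4" by (rule psi_bound)
  with ind[of "plen Q"] n show ?thesis by simp
qed


section \<open>The triangle graph\<close>

definition Xt :: "(nat, nat) graph" where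
  "Xt = \<lparr>gV = {0,1,2}, gE = {0,1,2}, src = (\<lambda>e. if e = 1 then 1 else 0),
         tgt = (\<lambda>e. if e = 0 then 1 else 2)\<rparr>"

lemma Xt_wf: "wf_graph Xt" unfolding wf_graph_def Xt_def by auto

lemma tri_short: assumes p: "is_path Xt p" shows "plen p \<le> 2"
proof -
  have ind: "i \<le> plen p \<Longrightarrow> i \<le> fst p ! i" for i
  proof (induction i)
    case 0 then show ?case by simp
  next
    case (Suc i)
    then have i: "i < length (snd p)" unfolding plen_def by simp
    have e: "snd p ! i \<in> {0,1,2}" and s: "src Xt (snd p ! i) = fst p ! i"
      and t: "tgt Xt (snd p ! i) = fst p ! Suc i"
      using p i unfolding is_path_def Xt_def by auto
    have "fst p ! i < fst p ! Suc i" using e s t unfolding Xt_def by auto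
    then show ?case using Suc by simp
  qed
  have "fst p ! plen p \<in> set (fst p)" using p unfolding is_path_def plen_def by simp
  hence "fst p ! plen p \<le> 2" using p unfolding is_path_def Xt_def by auto
  with ind[of "plen p"] show ?thesis by simp
qed

lemma cls: assumes p: "is_path Xt p" and k: "k \<le> plen p" and v: "v < 3"
  and sp: "is_path Xt (subpath k 0 p)"
  shows "lanV_rel F1 Xt `` {(subpath k 0 p, v)} = lanV_rel F1 Xt `` {(p, v + 3*k)}"
proof -
  have v': "v \<in> gV (fst F1 0)" using v by (simp add: F1_def)
  have g: "((subpath k 0 p, v), (p, v + 3*k)) \<in> lanV_gen F1 Xt"
    using genV_intro[OF p _ v'] k by (simp add: F1_def)
  show ?thesis
  proof (rule gen_class[OF g])
    show "(subpath k 0 p, v) \<in> lanV_el F1 Xt" using sp v plen_subpath[of k 0 p] k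
      unfolding lanV_el_def by (simp add: F1_def)
    show "(p, v + 3*k) \<in> lanV_el F1 Xt" using p v k unfolding lanV_el_def by (simp add: F1_def)
  qed
qed

definition "pA = lanV_rel F1 Xt `` {(([0],[]), 0)}"
definition "pB = lanV_rel F1 Xt `` {(([1],[]), 1)}"
definition "pC = lanV_rel F1 Xt `` {(([2],[]), 2)}"
definition "x1 = (([0,1],[0]), 0::nat)"
definition "x2 = (([1,2],[1]), 1::nat)"
definition "x3 = (([0,2],[2]), 2::nat)"
definition "D1 = lanE_rel F1 Xt `` {x1}"
definition "D2 = lanE_rel F1 Xt `` {x2}"
definition "D3 = lanE_rel F1 Xt `` {x3}"

lemma path_simps:
  "is_path Xt ([0],[])" "is_path Xt ([1],[])" "is_path Xt ([2],[])"
  "is_path Xt ([0,1],[0])" "is_path Xt ([1,2],[1])" "is_path Xt ([0,2],[2])"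
  unfolding is_path_def Xt_def by (auto simp: less_Suc_eq)

lemma x_el: "x1 \<in> lanE_el F1 Xt" "x2 \<in> lanE_el F1 Xt" "x3 \<in> lanE_el F1 Xt"
  unfolding x1_def x2_def x3_def lanE_el_def using path_simps by (auto simp: F1_def plen_def)

lemma ABC_in: "pA \<in> gV (lan_obj F1 Xt)" "pB \<in> gV (lan_obj F1 Xt)" "pC \<in> gV (lan_obj F1 Xt)"
  unfolding pA_def pB_def pC_def lan_obj_def using path_simps
  by (auto intro!: quotientI simp: lanV_el_def F1_def plen_def)

lemma D_in: "D1 \<in> gE (lan_obj F1 Xt)" "D2 \<in> gE (lan_obj F1 Xt)" "D3 \<in> gE (lan_obj F1 Xt)"
  unfolding D1_def D2_def D3_def lan_obj_def using x_el by (auto intro!: quotientI)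

lemma srctgt:
  "src (lan_obj F1 Xt) D1 = pA" "tgt (lan_obj F1 Xt) D1 = pB"
  "src (lan_obj F1 Xt) D2 = pB" "tgt (lan_obj F1 Xt) D2 = pC"
  "src (lan_obj F1 Xt) D3 = pC" "tgt (lan_obj F1 Xt) D3 = pA"
proof -
  note S = src_class[OF F1_functor] tgt_class[OF F1_functor]
  have c1: "lanV_rel F1 Xt `` {(([0,1],[0]), 0)} = pA"
    using cls[OF path_simps(4), of 0 0] path_simps unfolding pA_def by (simp add: subpath_def plen_def)
  have c2: "lanV_rel F1 Xt `` {(([0,1],[0]), 4)} = pB"
    using cls[OF path_simps(4), of 1 1] path_simps unfolding pB_def by (simp add: subpath_def plen_def)
  have c3: "lanV_rel F1 Xt `` {(([1,2],[1]), 1)} = pB"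
    using cls[OF path_simps(5), of 0 1] path_simps unfolding pB_def by (simp add: subpath_def plen_def)
  have c4: "lanV_rel F1 Xt `` {(([1,2],[1]), 5)} = pC"
    using cls[OF path_simps(5), of 1 2] path_simps unfolding pC_def by (simp add: subpath_def plen_def)
  have c5: "lanV_rel F1 Xt `` {(([0,2],[2]), 5)} = pC"
    using cls[OF path_simps(6), of 1 2] path_simps unfolding pC_def by (simp add: subpath_def plen_def)
  have c6: "lanV_rel F1 Xt `` {(([0,2],[2]), 0)} = pA"
    using cls[OF path_simps(6), of 0 0] path_simps unfolding pA_def by (simp add: subpath_def plen_def)
  show "src (lan_obj F1 Xt) D1 = pA" "tgt (lan_obj F1 Xt) D1 = pB"
    "src (lan_obj F1 Xt) D2 = pB" "tgt (lan_obj F1 Xt) D2 = pC"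
    "src (lan_obj F1 Xt) D3 = pC" "tgt (lan_obj F1 Xt) D3 = pA"
    unfolding D1_def D2_def D3_def using S[OF x_el(1)] S[OF x_el(2)] S[OF x_el(3)] c1 c2 c3 c4 c5 c6
    by (simp_all add: sigS_def sigT_def x1_def x2_def x3_def F1_src F1_tgt plen_def)
qed


definition "PP = (map (\<lambda>i. [pA,pB,pC] ! (i mod 3)) [0..<13], map (\<lambda>i. [D1,D2,D3] ! (i mod 3)) [0..<12])"

lemma PP_path: "is_path (lan_obj F1 Xt) PP"
proof -
  have V: "set (fst PP) \<subseteq> gV (lan_obj F1 Xt)"
  proof
    fix c assume "c \<in> set (fst PP)"
    then obtain i where "c = [pA,pB,pC] ! (i mod 3)" unfolding PP_def by auto
    moreover have "i mod 3 = 0 \<or> i mod 3 = 1 \<or> i mod 3 = 2" by presburger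
    ultimately show "c \<in> gV (lan_obj F1 Xt)" using ABC_in by auto
  qed
  have E: "snd PP ! i \<in> gE (lan_obj F1 Xt) \<and> src (lan_obj F1 Xt) (snd PP ! i) = fst PP ! i
      \<and> tgt (lan_obj F1 Xt) (snd PP ! i) = fst PP ! Suc i" if i: "i < length (snd PP)" for i
  proof -
    have i12: "i < 12" using i unfolding PP_def by simp
    have ei: "snd PP ! i = [D1,D2,D3] ! (i mod 3)" "fst PP ! i = [pA,pB,pC] ! (i mod 3)"
      "fst PP ! Suc i = [pA,pB,pC] ! (Suc i mod 3)" using i12 unfolding PP_def by (simp_all del: upt_Suc)
    have "(i mod 3 = 0 \<and> Suc i mod 3 = 1) \<or> (i mod 3 = 1 \<and> Suc i mod 3 = 2) \<or> (i mod 3 = 2 \<and> Suc i mod 3 = 0)"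
      by presburger
    then show ?thesis unfolding ei using D_in srctgt by auto
  qed
  show ?thesis unfolding is_path_def using V E by (simp add: PP_def)
qed

lemma GX_nonempty: "gE (lan_obj F2 (lan_obj F1 Xt)) \<noteq> {}"
proof -
  have "(PP, 0) \<in> lanE_el F2 (lan_obj F1 Xt)"
    unfolding lanE_el_def using PP_path by (simp add: F2_def plen_def PP_def)
  thus ?thesis by (auto simp: lan_obj_def)
qed

lemma LanGK_empty: "gE (lan_obj (comp_res F2 F1) Xt) = {}"
proof -
  have "lanE_el F2 (lan_obj F1 (lin n)) = {}" if "n \<le> 2" for n
    using G1_short[OF that] unfolding lanE_el_def by (auto simp: F2_def) (fastforce)
  hence "gE (fst (comp_res F2 F1) n) = {}" if "n \<le> 2" for n
    using that by (simp add: comp_res_def lan_obj_def)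
  hence "lanE_el (comp_res F2 F1) Xt = {}"
    unfolding lanE_el_def using tri_short by auto
  thus ?thesis by (simp add: lan_obj_def)
qed

theorem corollary7p5:
  shows "\<exists>(F1 :: (nat, nat) d0fun) (F2 :: (nat, nat) d0fun).
           d0_functor F1 \<and> d0_functor F2 \<and>
           \<not> (\<forall>X :: (nat, nat) graph. wf_graph X \<longrightarrow> comp_induced_at F2 F1 X)"
proof (intro exI conjI)
  show "d0_functor F1" by (rule F1_functor)
  show "d0_functor F2" by (rule F2_functor)
  show "\<not> (\<forall>X :: (nat, nat) graph. wf_graph X \<longrightarrow> comp_induced_at F2 F1 X)"
  proof
    assume "\<forall>X :: (nat, nat) graph. wf_graph X \<longrightarrow> comp_induced_at F2 F1 X"
    hence "comp_induced_at F2 F1 Xt" using Xt_wf by blast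
    hence "bij_betw (snd (comparison F2 F1 Xt)) {} (gE (lan_obj F2 (lan_obj F1 Xt)))"
      unfolding comp_induced_at_def using LanGK_empty by simp
    hence "gE (lan_obj F2 (lan_obj F1 Xt)) = {}" by (simp add: bij_betw_def)
    with GX_nonempty show False by simp
  qed
qed

end
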